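(* For all integers $n\ge 0$ and $\alpha\ge 0$, \[\overline{p}\big(4^{\alpha}(40n+35)\big)\equiv 0 \pmod 5,\] and \[\overline{p}(5\cdot 4^{\alpha+1} n)\equiv (-1)^n\,\overline{p}(5n) \pmod 5.\]
   Context: An overpartition of a nonnegative integer $n$ is a partition of $n$ in which the first occurrence of each distinct part may (or may not) be overlined; $\overline{p}(n)$ denotes the number of overpartitions of $n$ (with $\overline{p}(0)=1$). Equivalently, $\sum_{n\ge0}\overline{p}(n)q^n=\prod_{k\ge1}\frac{1+q^k}{1-q^k}$. *)

theory Defs
  imports Main "HOL-Library.Multiset" "HOL-Number_Theory.Cong"
begin

text \<open>A partition of n is a multiset of positive integers summing to n. An overpartition
  of n is a partition M of n together with a set S of distinct parts of M whose first
  occurrence is overlined.\<close>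

definition overpartitions :: "nat \<Rightarrow> (nat multiset \<times> nat set) set" where
  "overpartitions n = {(M, S). (\<forall>x \<in># M. x > 0) \<and> sum_mset M = n \<and> S \<subseteq> set_mset M}"

definition overpartition_count :: "nat \<Rightarrow> nat" where
  "overpartition_count n = card (overpartitions n)"

end

theory Submission
  imports Defs "HOL-Computational_Algebra.Formal_Laurent_Series" "HOL-Number_Theory.Cong"
begin


definition opK :: "nat \<Rightarrow> nat \<Rightarrow> (nat multiset \<times> nat set) set" where
  "opK K n = {(M, S). (\<forall>x\<in>#M. 0 < x \<and> x \<le> K) \<and> sum_mset M = n \<and> S \<subseteq> set_mset M}"

lemma size_le_sum_mset: "(\<forall>x\<in>#M. 0 < x) \<Longrightarrow> size M \<le> sum_mset (M::nat multiset)"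
  by (induction M) auto

lemma mem_le_sum_mset: "x \<in># M \<Longrightarrow> x \<le> sum_mset (M::nat multiset)"
  using sum_mset.remove by fastforce

lemma finite_opK: "finite (opK K n)"
proof -
  have "opK K n \<subseteq> (\<Union>k\<le>n. multisets_of_size {1..n} k) \<times> Pow {1..n}"
  proof
    fix p assume "p \<in> opK K n"
    then obtain M S where p: "p = (M,S)" and h: "\<forall>x\<in>#M. 0 < x \<and> x \<le> K" "sum_mset M = n" "S \<subseteq> set_mset M"
      unfolding opK_def by auto
    have sub: "set_mset M \<subseteq> {1..n}"
      using h mem_le_sum_mset by fastforce
    have "size M \<le> n" using size_le_sum_mset[of M] h by auto
    then show "p \<in> (\<Union>k\<le>n. multisets_of_size {1..n} k) \<times> Pow {1..n}"
      using sub h p by (auto simp: multisets_of_size_def)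
  qed
  moreover have "finite ((\<Union>k\<le>n. multisets_of_size {1..n} k) \<times> Pow {1..n})" by auto
  ultimately show ?thesis by (rule finite_subset)
qed

lemma opK_0: "opK 0 n = (if n = 0 then {({#},{})} else {})"
proof -
  have h: "M = {#}" if "\<forall>x\<in>#M. 0 < x \<and> x \<le> (0::nat)" for M
    using that by (metis multiset_nonemptyE not_le)
  have "opK 0 n = {(M,S). M = ({#}::nat multiset) \<and> n = 0 \<and> S = ({}::nat set)}"
  proof (intro set_eqI iffI)
    fix p assume "p \<in> opK 0 n"
    then obtain M S where p: "p = (M,S)" "\<forall>x\<in>#M. 0 < x \<and> x \<le> (0::nat)" "sum_mset M = n" "S \<subseteq> set_mset M"
      unfolding opK_def by blast
    then have "M = {#}" using h by blast
    then show "p \<in> {(M,S). M = ({#}::nat multiset) \<and> n = 0 \<and> S = ({}::nat set)}" using p by auto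
  next
    fix p assume "p \<in> {(M,S). M = ({#}::nat multiset) \<and> n = 0 \<and> S = ({}::nat set)}"
    then show "p \<in> opK 0 n" unfolding opK_def by auto
  qed
  then show ?thesis by auto
qed

lemma card_opK_0: "card (opK 0 n) = (if n = 0 then 1 else 0)"
  by (simp add: opK_0)

lemma mem_diff_single: "x \<in># M \<Longrightarrow> x \<noteq> k \<Longrightarrow> x \<in># M - {#k#}"
  by (simp add: in_diff_count)

lemma cnt1: "x \<in># M \<Longrightarrow> \<not> 2 \<le> count M x \<Longrightarrow> count M x = 1"
proof -
  assume a: "x \<in># M" "\<not> 2 \<le> count M x"
  have "count M x > 0" using a by simp
  then show ?thesis using a(2) by linarith
qed

lemma card_opK_Suc:
  "card (opK (Suc K) n) = card (opK K n) +
     (if Suc K \<le> n then card (opK (Suc K) (n - Suc K)) + card (opK K (n - Suc K)) else 0)"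
proof -
  let ?k = "Suc K"
  define A where "A = {p \<in> opK ?k n. ?k \<notin># fst p}"
  define B where "B = {p \<in> opK ?k n. ?k \<in># fst p \<and> (?k \<in> snd p \<longrightarrow> count (fst p) ?k \<ge> 2)}"
  define C where "C = {p \<in> opK ?k n. ?k \<in># fst p \<and> ?k \<in> snd p \<and> count (fst p) ?k = 1}"
  have split: "opK ?k n = A \<union> B \<union> C" unfolding A_def B_def C_def using cnt1 by auto
  have fin: "finite A" "finite B" "finite C" unfolding A_def B_def C_def
    using finite_opK by auto
  have disj: "A \<inter> B = {}" "(A \<union> B) \<inter> C = {}" unfolding A_def B_def C_def by auto
  have cA: "A = opK K n"
  proof -
    have "Suc K \<notin># M" if "\<forall>x\<in>#M. 0 < x \<and> x \<le> K" for M
      using that Suc_n_not_le_n by blast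
    then show ?thesis unfolding A_def opK_def by (auto simp: le_Suc_eq)
  qed
  have cB: "card B = (if ?k \<le> n then card (opK ?k (n - ?k)) else 0)"
  proof (cases "?k \<le> n")
    case True
    have "bij_betw (\<lambda>(M,S). (add_mset ?k M, S)) (opK ?k (n - ?k)) B"
    proof (rule bij_betwI[where g = "\<lambda>(M,S). (M - {#?k#}, S)"])
      show "(\<lambda>(M, S). (add_mset ?k M, S)) \<in> opK ?k (n - ?k) \<rightarrow> B"
        using True unfolding B_def opK_def by auto
      show "(\<lambda>(M, S). (M - {#?k#}, S)) \<in> B \<rightarrow> opK ?k (n - ?k)"
      proof
        fix p assume "p \<in> B"
        then obtain M S where p: "p = (M,S)" and h: "\<forall>x\<in>#M. 0 < x \<and> x \<le> ?k" "sum_mset M = n"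
          "S \<subseteq> set_mset M" "?k \<in># M" "?k \<in> S \<longrightarrow> count M ?k \<ge> 2"
          unfolding B_def opK_def by auto
        have "sum_mset (M - {#?k#}) = n - ?k" using h sum_mset.remove[of ?k M] by auto
        moreover have "S \<subseteq> set_mset (M - {#?k#})"
        proof
          fix x assume "x \<in> S"
          show "x \<in># M - {#?k#}"
          proof (cases "x = ?k")
            case True thus ?thesis using h \<open>x \<in> S\<close> by (auto simp: in_diff_count)
          next
            case False thus ?thesis using h \<open>x \<in> S\<close> by (auto simp: in_diff_count)
          qed
        qed
        moreover have "\<forall>x\<in>#M - {#?k#}. 0 < x \<and> x \<le> ?k" using h by (meson in_diffD)
        ultimately show "(\<lambda>(M, S). (M - {#?k#}, S)) p \<in> opK ?k (n - ?k)"
          unfolding opK_def p by auto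
      qed
      show "(\<lambda>(M, S). (M - {#?k#}, S)) ((\<lambda>(M, S). (add_mset ?k M, S)) x) = x" for x
        by (cases x) auto
      show "(\<lambda>(M, S). (add_mset ?k M, S)) ((\<lambda>(M, S). (M - {#?k#}, S)) y) = y" if "y \<in> B" for y
        using that unfolding B_def by (cases y) auto
    qed
    then show ?thesis using True by (simp add: bij_betw_same_card)
  next
    case False
    have "B = {}"
    proof (rule ccontr)
      assume "B \<noteq> {}"
      then obtain M S where "(M,S) \<in> B" by auto
      then have "?k \<in># M" "sum_mset M = n" unfolding B_def opK_def by auto
      then show False using mem_le_sum_mset False by fastforce
    qed
    then show ?thesis using False by simp
  qed
  have cC: "card C = (if ?k \<le> n then card (opK K (n - ?k)) else 0)"
  proof (cases "?k \<le> n")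
    case True
    have "bij_betw (\<lambda>(M,S). (add_mset ?k M, insert ?k S)) (opK K (n - ?k)) C"
    proof (rule bij_betwI[where g = "\<lambda>(M,S). (M - {#?k#}, S - {?k})"])
      show "(\<lambda>(M, S). (add_mset ?k M, insert ?k S)) \<in> opK K (n - ?k) \<rightarrow> C"
      proof
        fix p assume "p \<in> opK K (n - ?k)"
        then obtain M S where p: "p = (M,S)" and h: "\<forall>x\<in>#M. 0 < x \<and> x \<le> K" "sum_mset M = n - ?k"
          "S \<subseteq> set_mset M" unfolding opK_def by auto
        have "count M ?k = 0" using h by (metis count_inI not_less_eq_eq order_refl)
        then show "(\<lambda>(M, S). (add_mset ?k M, insert ?k S)) p \<in> C"
          using h True unfolding C_def opK_def p by auto
      qed
      show "(\<lambda>(M, S). (M - {#?k#}, S - {?k})) \<in> C \<rightarrow> opK K (n - ?k)"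
      proof
        fix p assume "p \<in> C"
        then obtain M S where p: "p = (M,S)" and h: "\<forall>x\<in>#M. 0 < x \<and> x \<le> ?k" "sum_mset M = n"
          "S \<subseteq> set_mset M" "?k \<in># M" "?k \<in> S" "count M ?k = 1"
          unfolding C_def opK_def by auto
        have "sum_mset (M - {#?k#}) = n - ?k" using h sum_mset.remove[of ?k M] by auto
        moreover have "S - {?k} \<subseteq> set_mset (M - {#?k#})"
        proof
          fix x assume "x \<in> S - {?k}"
          then show "x \<in># M - {#?k#}" using h(3) mem_diff_single[of x M ?k] by auto
        qed
        moreover have "\<forall>x\<in>#M - {#?k#}. 0 < x \<and> x \<le> K"
        proof
          fix x assume x: "x \<in># M - {#?k#}"
          then have "x \<in># M" by (meson in_diffD)
          moreover have "x \<noteq> ?k" using x h by (auto simp: in_diff_count)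
          ultimately show "0 < x \<and> x \<le> K" using h by fastforce
        qed
        ultimately show "(\<lambda>(M, S). (M - {#?k#}, S - {?k})) p \<in> opK K (n - ?k)"
          unfolding opK_def p by auto
      qed
      show "(\<lambda>(M, S). (M - {#?k#}, S - {?k})) ((\<lambda>(M, S). (add_mset ?k M, insert ?k S)) x) = x"
        if xin: "x \<in> opK K (n - ?k)" for x
      proof -
        obtain M S where x: "x = (M,S)" and h: "\<forall>x\<in>#M. 0 < x \<and> x \<le> K" "S \<subseteq> set_mset M"
          using xin unfolding opK_def by (cases x) auto
        have "?k \<notin> S" using h by fastforce
        then show ?thesis using x by auto
      qed
      show "(\<lambda>(M, S). (add_mset ?k M, insert ?k S)) ((\<lambda>(M, S). (M - {#?k#}, S - {?k})) y) = y"
        if "y \<in> C" for y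
        using that unfolding C_def by (cases y) (auto simp: insert_absorb)
    qed
    then show ?thesis using True by (simp add: bij_betw_same_card)
  next
    case False
    have "C = {}"
    proof (rule ccontr)
      assume "C \<noteq> {}"
      then obtain M S where "(M,S) \<in> C" by auto
      then have "?k \<in># M" "sum_mset M = n" unfolding C_def opK_def by auto
      then show False using mem_le_sum_mset False by fastforce
    qed
    then show ?thesis using False by simp
  qed
  have "card (opK ?k n) = card A + card B + card C"
    unfolding split using fin disj by (simp add: card_Un_disjoint)
  then show ?thesis using cA cB cC by simp
qed

lemma overpartitions_eq_opK: "K \<ge> n \<Longrightarrow> overpartitions n = opK K n"
  unfolding overpartitions_def opK_def using mem_le_sum_mset by fastforce



abbreviation qX :: "int fps" where "qX \<equiv> fps_X"

definition CK :: "nat \<Rightarrow> int fps" where "CK K = Abs_fps (\<lambda>n. int (card (opK K n)))"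

fun pm :: "nat \<Rightarrow> int fps" where "pm 0 = 1" | "pm (Suc K) = pm K * (1 - qX^Suc K)"
fun pp :: "nat \<Rightarrow> int fps" where "pp 0 = 1" | "pp (Suc K) = pp K * (1 + qX^Suc K)"
fun QQ :: "nat \<Rightarrow> int fps" where "QQ 0 = 1" | "QQ (Suc K) = QQ K * (1 - qX^(2*Suc K))"
fun OQ :: "nat \<Rightarrow> int fps" where "OQ 0 = 1" | "OQ (Suc K) = OQ K * (1 - qX^(2*K+1))"

lemma CK_0: "CK 0 = 1"
  by (simp add: fps_eq_iff CK_def card_opK_0)

lemma nth_mult_one_minus: "(f * (1 - qX^k)) $ n = f $ n - (if n < k then 0 else f $ (n - k))"
  by (simp add: right_diff_distrib fps_X_power_mult_right_nth)

lemma nth_mult_one_plus: "(f * (1 + qX^k)) $ n = f $ n + (if n < k then 0 else f $ (n - k))"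
  by (simp add: distrib_left fps_X_power_mult_right_nth)

lemma CK_Suc: "CK (Suc K) * (1 - qX^Suc K) = CK K * (1 + qX^Suc K)"
proof -
  have "(CK (Suc K) * (1 - qX^Suc K)) $ n = (CK K * (1 + qX^Suc K)) $ n" for n
    unfolding nth_mult_one_minus nth_mult_one_plus
    by (simp add: CK_def card_opK_Suc[of K n] not_less)
  then show ?thesis by (simp add: fps_eq_iff)
qed

lemma CK_pm: "CK K * pm K = pp K"
proof (induction K)
  case 0 then show ?case by (simp add: CK_0)
next
  case (Suc K)
  have "CK (Suc K) * pm (Suc K) = (CK (Suc K) * (1 - qX^Suc K)) * pm K" by (simp add: ac_simps)
  also have "\<dots> = (CK K * (1 + qX^Suc K)) * pm K" by (simp only: CK_Suc)
  also have "\<dots> = CK K * pm K * (1 + qX^Suc K)" by (simp only: ac_simps)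
  also have "\<dots> = pp (Suc K)" using Suc by simp
  finally show ?case .
qed

lemma one_plus_minus: "(1 + qX^k) * (1 - qX^k) = 1 - qX^(2*k)"
proof -
  have "qX^(2*k) = qX^k * qX^k" by (simp add: mult_2 power_add)
  then show ?thesis by (simp add: algebra_simps)
qed

lemma pp_pm: "pp K * pm K = QQ K"
proof (induction K)
  case 0 then show ?case by simp
next
  case (Suc K)
  have "pp (Suc K) * pm (Suc K) = (pp K * pm K) * ((1 + qX^Suc K) * (1 - qX^Suc K))"
    by (simp add: ac_simps)
  also have "\<dots> = QQ (Suc K)" using Suc by (simp only: one_plus_minus) simp
  finally show ?case .
qed

lemma pm_double: "pm (2*M) = OQ M * QQ M"
proof (induction M)
  case 0 then show ?case by simp
next
  case (Suc M)
  have "2 * Suc M = Suc (Suc (2*M))" by simp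
  then have "pm (2 * Suc M) = pm (2*M) * (1 - qX^(2*M+1)) * (1 - qX^(2*Suc M))"
    by simp
  then show ?case using Suc by (simp add: ac_simps)
qed

definition Agf :: "int fps" where "Agf = Abs_fps (\<lambda>n. int (overpartition_count n))"

lemma Agf_CK: "i \<le> M \<Longrightarrow> Agf $ i = CK M $ i"
  by (simp add: Agf_def CK_def overpartition_count_def overpartitions_eq_opK)

subsection \<open>Congruence modulo X^M\<close>

definition eqm :: "nat \<Rightarrow> int fps \<Rightarrow> int fps \<Rightarrow> bool" where
  "eqm M f g \<longleftrightarrow> (\<forall>i<M. f $ i = g $ i)"

lemma eqm_refl[simp]: "eqm M f f" by (simp add: eqm_def)
lemma eqm_sym: "eqm M f g \<Longrightarrow> eqm M g f" by (simp add: eqm_def)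
lemma eqm_trans: "eqm M f g \<Longrightarrow> eqm M g h \<Longrightarrow> eqm M f h" by (simp add: eqm_def)
lemma eqm_add: "eqm M f f' \<Longrightarrow> eqm M g g' \<Longrightarrow> eqm M (f + g) (f' + g')" by (simp add: eqm_def)
lemma eqm_diff: "eqm M f f' \<Longrightarrow> eqm M g g' \<Longrightarrow> eqm M (f - g) (f' - g')" by (simp add: eqm_def)
lemma eqm_mult: "eqm M f f' \<Longrightarrow> eqm M g g' \<Longrightarrow> eqm M (f * g) (f' * g')"
  unfolding eqm_def fps_mult_nth by (auto intro!: sum.cong)
lemma eqm_mono: "eqm M f g \<Longrightarrow> N \<le> M \<Longrightarrow> eqm N f g" by (simp add: eqm_def)

lemma eqm_sum: "(\<And>k. k \<in> S \<Longrightarrow> eqm M (f k) (g k)) \<Longrightarrow> eqm M (sum f S) (sum g S)"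
  unfolding eqm_def fps_sum_nth by auto

lemma eqm_Xpow_zero: "k \<ge> M \<Longrightarrow> eqm M (qX^k * f) 0"
  by (simp add: eqm_def fps_X_power_mult_nth)

lemma eqm_one_minus: "k \<ge> M \<Longrightarrow> eqm M (1 - qX^k) 1"
  by (simp add: eqm_def)

lemma eqm_cancel:
  assumes "eqm M (f * u) (g * u)" "u $ 0 = 1"
  shows "eqm M f g"
proof -
  define h where "h = f - g"
  have hu: "(h * u) $ i = 0" if "i < M" for i
    using assms(1) that unfolding eqm_def h_def by (simp add: algebra_simps)
  have "h $ i = 0" if "i < M" for i
    using that
  proof (induction i rule: less_induct)
    case (less i)
    have "(h * u) $ i = (\<Sum>j=0..i. h $ j * u $ (i - j))" by (simp add: fps_mult_nth)
    also have "\<dots> = h $ i * u $ (i - i) + (\<Sum>j\<in>{0..i} - {i}. h $ j * u $ (i - j))"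
      by (subst sum.remove[of "{0..i}" i]) auto
    also have "(\<Sum>j\<in>{0..i} - {i}. h $ j * u $ (i - j)) = 0"
      using less by (intro sum.neutral) auto
    finally show ?case using hu[OF less.prems] assms(2) by simp
  qed
  then show ?thesis unfolding eqm_def h_def by simp
qed

lemma pm_0[simp]: "pm K $ 0 = 1" by (induction K) auto
lemma pp_0[simp]: "pp K $ 0 = 1" by (induction K) auto
lemma QQ_0[simp]: "QQ K $ 0 = 1" by (induction K) auto
lemma OQ_0[simp]: "OQ K $ 0 = 1" by (induction K) auto

lemma pm_stable: "M \<le> K \<Longrightarrow> eqm M (pm K) (pm M)"
proof (induction K)
  case 0 then show ?case by simp
next
  case (Suc K)
  show ?case
  proof (cases "M \<le> K")
    case True
    then have "eqm M (pm K * (1 - qX^Suc K)) (pm M * 1)"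
      using Suc by (intro eqm_mult eqm_one_minus) auto
    then show ?thesis by simp
  next
    case False
    then have "M = Suc K" using Suc by simp
    then show ?thesis by simp
  qed
qed

lemma QQ_stable: "M \<le> K \<Longrightarrow> eqm M (QQ K) (QQ M)"
proof (induction K)
  case 0 then show ?case by simp
next
  case (Suc K)
  show ?case
  proof (cases "M \<le> K")
    case True
    then have "eqm M (QQ K * (1 - qX^(2*Suc K))) (QQ M * 1)"
      using Suc by (intro eqm_mult eqm_one_minus) auto
    then show ?thesis by simp
  next
    case False
    then have "M = Suc K" using Suc by simp
    then show ?thesis by simp
  qed
qed

lemma OQ_stable: "M \<le> K \<Longrightarrow> eqm M (OQ K) (OQ M)"
proof (induction K)
  case 0 then show ?case by simp
next
  case (Suc K)
  show ?case
  proof (cases "M \<le> K")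
    case True
    then have "eqm M (OQ K * (1 - qX^(2*K+1))) (OQ M * 1)"
      using Suc by (intro eqm_mult eqm_one_minus) auto
    then show ?thesis by simp
  next
    case False
    then have "M = Suc K" using Suc by simp
    then show ?thesis by simp
  qed
qed



fun qb :: "nat \<Rightarrow> nat \<Rightarrow> int fps" where
  "qb n 0 = 1"
| "qb 0 (Suc k) = 0"
| "qb (Suc n) (Suc k) = qb n k + qX^(2*Suc k) * qb n (Suc k)"

lemma qb_zero: "n < k \<Longrightarrow> qb n k = 0"
  by (induction n k rule: qb.induct) auto

lemma qb_prod: "k \<le> n \<Longrightarrow> qb n k * QQ k * QQ (n - k) = QQ n"
proof (induction n arbitrary: k)
  case 0 then show ?case by simp
next
  case (Suc n k)
  show ?case
  proof (cases k)
    case 0 then show ?thesis by simp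
  next
    case (Suc j)
    have j: "j \<le> n" using Suc.prems Suc by simp
    have t1: "qb n j * QQ (Suc j) * QQ (n - j) = QQ n * (1 - qX^(2*Suc j))"
    proof -
      have "qb n j * QQ (Suc j) * QQ (n - j) = (qb n j * QQ j * QQ (n - j)) * (1 - qX^(2*Suc j))"
        by (simp only: QQ.simps ac_simps)
      then show ?thesis using Suc.IH[OF j] by simp
    qed
    have t2: "qX^(2*Suc j) * qb n (Suc j) * QQ (Suc j) * QQ (n - j) = QQ n * (qX^(2*Suc j) - qX^(2*Suc n))"
    proof (cases "j < n")
      case True
      then have nj: "n - j = Suc (n - Suc j)" by simp
      have e: "qX^(2*Suc j) * qX^(2*(n-j)) = qX^(2*Suc n)"
        using True by (simp add: power_add[symmetric])
      have "qX^(2*Suc j) * qb n (Suc j) * QQ (Suc j) * QQ (n - j)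
          = qX^(2*Suc j) * (qb n (Suc j) * QQ (Suc j) * QQ (n - Suc j)) * (1 - qX^(2*(n-j)))"
        unfolding nj by (simp only: QQ.simps ac_simps)
      also have "\<dots> = QQ n * (qX^(2*Suc j) - qX^(2*Suc j) * qX^(2*(n-j)))"
        using Suc.IH[of "Suc j"] True by (simp add: algebra_simps)
      finally show ?thesis using e by simp
    next
      case False
      then have "j = n" using j by simp
      then show ?thesis by (simp add: qb_zero)
    qed
    have "qb (Suc n) k * QQ k * QQ (Suc n - k)
        = qb n j * QQ (Suc j) * QQ (n - j) + qX^(2*Suc j) * qb n (Suc j) * QQ (Suc j) * QQ (n - j)"
      using Suc by (simp add: algebra_simps)
    also have "\<dots> = QQ n * (1 - qX^(2*Suc n))" unfolding t1 t2 by (simp add: algebra_simps)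
    finally show ?thesis by simp
  qed
qed

lemma QQ_nz: "QQ k \<noteq> 0"
proof
  assume "QQ k = 0" then have "QQ k $ 0 = 0" by simp
  then show False by simp
qed

lemma qb_sym: "k \<le> n \<Longrightarrow> qb n (n - k) = qb n k"
proof -
  assume k: "k \<le> n"
  have "qb n (n - k) * (QQ k * QQ (n - k)) = qb n k * (QQ k * QQ (n - k))"
    using qb_prod[OF k] qb_prod[of "n - k" n] k by (simp add: ac_simps)
  moreover have "QQ k * QQ (n - k) \<noteq> 0" using QQ_nz by simp
  ultimately show ?thesis by simp
qed

definition G :: "nat \<Rightarrow> int \<Rightarrow> int fps" where "G N K = (if K < 0 then 0 else qb N (nat K))"

lemma G_rule: "G (Suc N) K = G N (K - 1) + qX^(2*nat K) * G N K"
proof (cases "K \<le> 0")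
  case True then show ?thesis by (cases "K = 0") (auto simp: G_def)
next
  case False
  then obtain j where j: "nat K = Suc j" by (metis gr0_implies_Suc zero_less_nat_eq not_le)
  then have "nat (K - 1) = j" by simp
  then show ?thesis using False j by (simp add: G_def)
qed

lemma G_zero: "K > int N \<Longrightarrow> G N K = 0"
  by (simp add: G_def qb_zero)

lemma G_neg: "K < 0 \<Longrightarrow> G N K = 0"
  by (simp add: G_def)

definition sg :: "int \<Rightarrow> int fps" where "sg k = (if even k then 1 else -1)"

definition F :: "nat \<Rightarrow> nat \<Rightarrow> int fps" where
  "F m n = (\<Sum>k\<in>{-int m..int n}. sg k * qX^(nat (k^2)) * G (m+n) (int m + k))"

lemma sum_shift_int: "(\<Sum>k\<in>{a..b}. f (k + c)) = (\<Sum>k\<in>{a+c..b+(c::int)}. f k)"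
proof -
  have "(\<Sum>k\<in>(\<lambda>k. k + c) ` {a..b}. f k) = (\<Sum>k\<in>{a..b}. f (k + c))"
    by (rule sum.reindex_cong[where l = "\<lambda>k. k + c"]) (auto simp: inj_on_def)
  then show ?thesis by simp
qed

lemma F_Suc_m: "F (Suc m) n = (1 - qX^(2*m+1)) * F m n"
proof -
  define N where "N = m + n"
  define f where "f j = sg (j - 1) * qX^(nat ((j-1)^2)) * (qX^(2*nat (int m + j)) * G N (int m + j))" for j
  have "F (Suc m) n = (\<Sum>k\<in>{- 1 - int m..int n}. sg k * qX^(nat (k^2)) * G (Suc N) (int m + 1 + k))"
    unfolding F_def N_def by (simp add: add_ac)
  also have "\<dots> = (\<Sum>k\<in>{- 1 - int m..int n}. sg k * qX^(nat (k^2)) * G N (int m + k))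
                 + (\<Sum>k\<in>{- 1 - int m..int n}. f (k + 1))"
    unfolding G_rule f_def by (simp add: algebra_simps sum.distrib)
  also have "(\<Sum>k\<in>{- 1 - int m..int n}. sg k * qX^(nat (k^2)) * G N (int m + k)) = F m n"
  proof -
    have "{- 1 - int m..int n} = insert (- 1 - int m) {-int m..int n}" by auto
    then show ?thesis unfolding F_def N_def by (simp add: G_neg)
  qed
  also have "(\<Sum>k\<in>{- 1 - int m..int n}. f (k + 1)) = (\<Sum>k\<in>{-int m..int n + 1}. f k)"
    by (simp add: sum_shift_int)
  also have "\<dots> = (\<Sum>k\<in>{-int m..int n}. f k)"
  proof -
    have "{-int m..int n + 1} = insert (int n + 1) {-int m..int n}" by auto
    moreover have "f (int n + 1) = 0" unfolding f_def N_def by (simp add: G_zero)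
    ultimately show ?thesis by simp
  qed
  also have "\<dots> = - (qX^(2*m+1) * F m n)"
    unfolding F_def N_def sum_distrib_left sum_negf[symmetric]
  proof (rule sum.cong)
    fix j assume j: "j \<in> {-int m..int n}"
    have e1: "sg (j - 1) = - sg j" by (simp add: sg_def)
    have e2: "nat ((j-1)^2) + 2*nat (int m + j) = nat (j^2) + (2*m+1)"
    proof -
      have h: "int m + j \<ge> 0" using j by simp
      have h2: "j * 2 \<le> 1 + j * j" using zero_le_power2[of "j - 1"] by (simp add: power2_eq_square algebra_simps)
      have "int (nat ((j-1)^2) + 2*nat (int m + j)) = int (nat (j^2) + (2*m+1))"
        using h h2 by (simp add: power2_eq_square algebra_simps)
      then show ?thesis by (simp only: of_nat_eq_iff)
    qed
    have "f j = - (sg j) * (qX^(nat ((j-1)^2)) * qX^(2*nat (int m + j))) * G (m+n) (int m + j)"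
      unfolding f_def e1 N_def by (simp add: ac_simps)
    also have "\<dots> = - (sg j) * (qX^(nat (j^2)) * qX^(2*m+1)) * G (m+n) (int m + j)"
      by (simp only: power_add[symmetric] e2)
    finally show "f j = - (qX ^ (2 * m + 1) * (sg j * qX ^ nat (j\<^sup>2) * G (m + n) (int m + j)))"
      by (simp add: ac_simps)
  qed simp
  finally show ?thesis by (simp add: algebra_simps)
qed

lemma F_sym: "F 0 n = F n 0"
proof -
  have "F n 0 = (\<Sum>k\<in>{-int n..0}. sg k * qX^(nat (k^2)) * G n (int n + k))"
    unfolding F_def by simp
  also have "\<dots> = (\<Sum>k\<in>uminus ` {0..int n}. sg k * qX^(nat (k^2)) * G n (int n + k))"
    by simp
  also have "\<dots> = (\<Sum>k\<in>{0..int n}. sg (-k) * qX^(nat ((-k)^2)) * G n (int n - k))"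
    by (subst sum.reindex) (auto simp: inj_on_def)
  also have "\<dots> = (\<Sum>k\<in>{0..int n}. sg k * qX^(nat (k^2)) * G n k)"
  proof (rule sum.cong)
    fix k assume k: "k \<in> {0..int n}"
    have "G n (int n - k) = qb n (n - nat k)" using k by (simp add: G_def nat_diff_distrib)
    also have "\<dots> = qb n (nat k)" using k by (intro qb_sym) auto
    also have "\<dots> = G n k" using k by (simp add: G_def)
    finally show "sg (-k) * qX^(nat ((-k)^2)) * G n (int n - k) = sg k * qX^(nat (k^2)) * G n k"
      by (simp add: sg_def)
  qed simp
  also have "\<dots> = F 0 n" unfolding F_def by simp
  finally show ?thesis by simp
qed

lemma F_m0: "F m 0 = OQ m"
proof (induction m)
  case 0 then show ?case by (simp add: F_def G_def sg_def)
next
  case (Suc m) then show ?case by (simp add: F_Suc_m ac_simps)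
qed

lemma F_mn: "F m n = OQ m * OQ n"
proof (induction m)
  case 0 then show ?case using F_sym F_m0 by simp
next
  case (Suc m) then show ?case by (simp add: F_Suc_m ac_simps)
qed



definition T :: "int fps" where
  "T = Abs_fps (\<lambda>i. (-1)^i * int (card {k::int. k^2 = int i}))"

lemma abs_le_sq: "\<bar>k::int\<bar> \<le> k^2"
proof (cases "k = 0")
  case True then show ?thesis by simp
next
  case False
  then have "\<bar>k\<bar> * 1 \<le> \<bar>k\<bar> * \<bar>k\<bar>" by (intro mult_left_mono) auto
  then show ?thesis by (simp add: power2_eq_square abs_mult_self_eq)
qed

lemma G_QQ:
  assumes "k^2 < int M" "2*M \<le> n"
  shows "eqm M (G (2*n) (int n + k) * QQ M) 1"
proof -
  have ak: "\<bar>k\<bar> < int M" using abs_le_sq[of k] assms(1) by linarith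
  define a where "a = nat (int n + k)"
  define b where "b = nat (int n - k)"
  have aM: "M \<le> a" and bM: "M \<le> b" and ab: "a + b = 2*n" and a2n: "a \<le> 2*n"
    using ak assms(2) unfolding a_def b_def by auto
  have G: "G (2*n) (int n + k) = qb (2*n) a"
    using ak assms(2) unfolding a_def G_def by auto
  have nab: "2*n - a = b" using ab by simp
  have "qb (2*n) a * QQ a * QQ b = QQ (2*n)"
    using qb_prod[OF a2n] by (simp only: nab)
  moreover have "eqm M (qb (2*n) a * QQ a * QQ b) (qb (2*n) a * QQ M * QQ M)"
    by (intro eqm_mult eqm_refl QQ_stable aM bM)
  moreover have "eqm M (QQ (2*n)) (QQ M)" using assms(2) by (intro QQ_stable) simp
  ultimately have "eqm M ((qb (2*n) a * QQ M) * QQ M) (QQ M)"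
    by (metis eqm_sym eqm_trans)
  then have "eqm M ((qb (2*n) a * QQ M) * QQ M) (1 * QQ M)" by simp
  then have "eqm M (qb (2*n) a * QQ M) 1" by (rule eqm_cancel) simp
  then show ?thesis using G by simp
qed

lemma nth_X_sg: "(qX^a * sg k) $ i = (if i = a then (if even k then 1 else -1) else 0)"
  by (simp add: sg_def fps_X_power_mult_nth)

lemma even_sq_iff: "even ((k::int)^2) \<longleftrightarrow> even k"
  by simp

lemma F_QQ_T:
  assumes "2*M \<le> n"
  shows "eqm M (F n n * QQ M) T"
proof -
  define I where "I = {-int n..int n}"
  have h1: "F n n * QQ M = (\<Sum>k\<in>I. qX^(nat(k^2)) * (sg k * (G (2*n) (int n + k) * QQ M)))"
    unfolding F_def I_def sum_distrib_right mult_2 by (simp add: ac_simps)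
  have h2: "eqm M (\<Sum>k\<in>I. qX^(nat(k^2)) * (sg k * (G (2*n) (int n + k) * QQ M)))
                      (\<Sum>k\<in>I. if k^2 < int M then qX^(nat(k^2)) * sg k else 0)"
  proof (rule eqm_sum)
    fix k assume "k \<in> I"
    show "eqm M (qX^(nat(k^2)) * (sg k * (G (2*n) (int n + k) * QQ M)))
                (if k^2 < int M then qX^(nat(k^2)) * sg k else 0)"
    proof (cases "k^2 < int M")
      case True
      then have "eqm M (qX^(nat(k^2)) * (sg k * (G (2*n) (int n + k) * QQ M))) (qX^(nat(k^2)) * (sg k * 1))"
        using G_QQ[OF True assms] by (intro eqm_mult eqm_refl)
      then show ?thesis using True by simp
    next
      case False
      then show ?thesis by (simp add: eqm_Xpow_zero)
    qed
  qed
  have h3: "eqm M (\<Sum>k\<in>I. if k^2 < int M then qX^(nat(k^2)) * sg k else 0) T"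
    unfolding eqm_def
  proof (intro allI impI)
    fix i assume iM: "i < M"
    have "(\<Sum>k\<in>I. if k^2 < int M then qX^(nat(k^2)) * sg k else 0) $ i
        = (\<Sum>k\<in>I. if k^2 = int i then (if even k then 1 else -1) else 0)"
      unfolding fps_sum_nth
    proof (rule sum.cong)
      fix k assume "k \<in> I"
      show "(if k^2 < int M then qX^(nat(k^2)) * sg k else 0) $ i = (if k^2 = int i then (if even k then 1 else -1) else 0)"
        using iM by (auto simp: nth_X_sg)
    qed simp
    also have "\<dots> = (\<Sum>k\<in>{k\<in>I. k^2 = int i}. (if even k then 1 else -1))"
      by (subst sum.inter_filter) (auto simp: I_def)
    also have "\<dots> = (\<Sum>k\<in>{k\<in>I. k^2 = int i}. (-1)^i)"
    proof (rule sum.cong)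
      fix k assume "k \<in> {k\<in>I. k^2 = int i}"
      then have "even k \<longleftrightarrow> even i"
      proof -
        have "k^2 = int i" using \<open>k \<in> {k\<in>I. k^2 = int i}\<close> by simp
        then have "even (k^2) \<longleftrightarrow> even (int i)" by simp
        then show ?thesis by simp
      qed
      then show "(if even k then 1 else -1) = ((-1)^i :: int)" by simp
    qed simp
    also have "{k\<in>I. k^2 = int i} = {k. k^2 = int i}"
    proof -
      have "k \<in> I" if "k^2 = int i" for k
        using abs_le_sq[of k] that iM assms unfolding I_def by auto
      then show ?thesis by auto
    qed
    also have "(\<Sum>k\<in>{k. k^2 = int i}. (-1)^i) = T $ i"
      by (simp add: T_def)
    finally show "(\<Sum>k\<in>I. if k^2 < int M then qX^(nat(k^2)) * sg k else 0) $ i = T $ i" .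
  qed
  show ?thesis unfolding h1 using eqm_trans[OF h2 h3] .
qed

lemma T_Agf: "T * Agf = 1"
proof -
  have "(T * Agf) $ i = (1::int fps) $ i" for i
  proof -
    define M where "M = Suc i"
    define n where "n = 2 * M"
    have "eqm M T (F n n * QQ M)" using F_QQ_T[of M n] by (simp add: n_def eqm_sym)
    also have "F n n * QQ M = OQ n * OQ n * QQ M" by (simp add: F_mn)
    finally have E0: "eqm M T (OQ n * OQ n * QQ M)" .
    have "M \<le> n" by (simp add: n_def)
    then have "eqm M (OQ n * OQ n * QQ M) (OQ M * OQ M * QQ M)"
      using OQ_stable[of M n] by (intro eqm_mult eqm_refl)
    then have E1: "eqm M T (OQ M * OQ M * QQ M)" using E0 eqm_trans by blast
    have E3: "eqm M (T * CK M * (pm M * pm M)) (OQ M * OQ M * QQ M * CK M * (pm M * pm M))"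
      using E1 by (intro eqm_mult eqm_refl)
    have "OQ M * OQ M * QQ M * CK M * (pm M * pm M) = OQ M * OQ M * QQ M * (CK M * pm M) * pm M"
      by (simp add: ac_simps)
    also have "\<dots> = OQ M * OQ M * QQ M * (pp M * pm M)" by (simp only: CK_pm ac_simps)
    also have "\<dots> = OQ M * OQ M * QQ M * QQ M" by (simp only: pp_pm)
    also have "\<dots> = (OQ M * QQ M) * (OQ M * QQ M)" by (simp only: ac_simps)
    also have "\<dots> = pm (2*M) * pm (2*M)" by (simp add: pm_double)
    finally have E4: "eqm M (T * CK M * (pm M * pm M)) (pm (2*M) * pm (2*M))" using E3 by simp
    have "eqm M (pm (2*M) * pm (2*M)) (1 * (pm M * pm M))"
      using pm_stable[of M "2*M"] by (simp add: eqm_mult)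
    then have "eqm M ((T * CK M) * (pm M * pm M)) (1 * (pm M * pm M))"
      using E4 eqm_trans by (simp add: ac_simps)
    then have "eqm M (T * CK M) 1" by (rule eqm_cancel) simp
    moreover have "eqm M (T * Agf) (T * CK M)"
      by (intro eqm_mult eqm_refl) (simp add: eqm_def Agf_CK)
    ultimately have "eqm M (T * Agf) 1" by (rule eqm_trans[rotated])
    then show ?thesis unfolding eqm_def M_def by simp
  qed
  then show ?thesis by (simp add: fps_eq_iff)
qed



definition z5 :: "int fps \<Rightarrow> bool" where "z5 h \<longleftrightarrow> (\<forall>n. (5::int) dvd h $ n)"

definition cong5 :: "int fps \<Rightarrow> int fps \<Rightarrow> bool" where "cong5 f g \<longleftrightarrow> z5 (f - g)"

lemma z5_0[simp]: "z5 0" by (simp add: z5_def)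
lemma z5_add: "z5 f \<Longrightarrow> z5 g \<Longrightarrow> z5 (f + g)" by (simp add: z5_def)
lemma z5_diff: "z5 f \<Longrightarrow> z5 g \<Longrightarrow> z5 (f - g)" by (simp add: z5_def)
lemma z5_mult_left: "z5 h \<Longrightarrow> z5 (h * k)"
  unfolding z5_def fps_mult_nth by (auto intro!: dvd_sum)
lemma z5_mult_right: "z5 h \<Longrightarrow> z5 (k * h)"
  using z5_mult_left[of h k] by (simp add: mult.commute)
lemma z5_const5: "z5 (fps_const 5 * h)" by (simp add: z5_def)

lemma cong5_refl[simp]: "cong5 f f" by (simp add: cong5_def)
lemma cong5_sym: "cong5 f g \<Longrightarrow> cong5 g f"
  unfolding cong5_def z5_def by (metis dvd_minus_iff minus_diff_eq fps_neg_nth)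
lemma cong5_trans: "cong5 f g \<Longrightarrow> cong5 g h \<Longrightarrow> cong5 f h"
proof -
  assume "cong5 f g" "cong5 g h"
  then have "z5 ((f - g) + (g - h))" unfolding cong5_def by (rule z5_add)
  then show ?thesis unfolding cong5_def by simp
qed
lemma cong5_add: "cong5 f f' \<Longrightarrow> cong5 g g' \<Longrightarrow> cong5 (f + g) (f' + g')"
proof -
  assume "cong5 f f'" "cong5 g g'"
  then have "z5 ((f - f') + (g - g'))" unfolding cong5_def by (rule z5_add)
  then show ?thesis unfolding cong5_def by (simp add: algebra_simps)
qed
lemma cong5_diff: "cong5 f f' \<Longrightarrow> cong5 g g' \<Longrightarrow> cong5 (f - g) (f' - g')"
proof -
  assume "cong5 f f'" "cong5 g g'"
  then have "z5 ((f - f') - (g - g'))" unfolding cong5_def by (rule z5_diff)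
  then show ?thesis unfolding cong5_def by (simp add: algebra_simps)
qed
lemma cong5_mult: "cong5 f f' \<Longrightarrow> cong5 g g' \<Longrightarrow> cong5 (f * g) (f' * g')"
proof -
  assume "cong5 f f'" "cong5 g g'"
  then have "z5 ((f - f') * g + f' * (g - g'))" unfolding cong5_def
    by (intro z5_add z5_mult_left z5_mult_right)
  then show ?thesis unfolding cong5_def by (simp add: algebra_simps)
qed

lemma cong5_nth: "cong5 f g \<Longrightarrow> (5::int) dvd (f $ n - g $ n)"
  unfolding cong5_def z5_def by simp

lemma step5: "(c+1)^5 - (c+1) - (c^5 - c) = 5*(c^4 + 2*c^3 + 2*c^2 + (c::int))"
  by (simp add: eval_nat_numeral algebra_simps)
lemma fermat5: "(5::int) dvd (c^5 - c)"
proof (induction c rule: int_induct[where k = 0])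
  case base then show ?case by simp
next
  case (step1 i)
  have "(i+1)^5 - (i+1) = (i^5 - i) + 5*(i^4 + 2*i^3 + 2*i^2 + i)" using step5[of i] by (simp only: diff_add_eq[symmetric])
  then show ?case using step1 by (metis dvd_add dvd_triv_left)
next
  case (step2 i)
  have "i^5 - i = ((i - 1)^5 - (i - 1)) + 5*((i-1)^4 + 2*(i-1)^3 + 2*(i-1)^2 + (i-1))" using step5[of "i - 1"] by simp
  then show ?case using step2 by (metis dvd_add_left_iff dvd_triv_left)
qed

definition dil :: "int fps \<Rightarrow> int fps" where "dil f = f oo (fps_X ^ 5)"

lemma dil_nth: "dil f $ n = (if 5 dvd n then f $ (n div 5) else 0)"
  unfolding dil_def by (rule fps_nth_compose_X_power)

lemma dil_mult: "dil (f * g) = dil f * dil g"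
  unfolding dil_def by (rule fps_compose_mult_distrib) simp

lemma dil_add: "dil (f + g) = dil f + dil g"
  unfolding dil_def by (rule fps_compose_add_distrib)

lemma dil_one[simp]: "dil 1 = 1"
  unfolding dil_def by simp

lemma binom5_gen: "(a + b)^5 = a^5 + b^5 + 5 * (a^4*b + 2*a^3*b^2 + 2*a^2*b^3 + a*b^4)"
  for a b :: "'a::comm_ring_1"
  by (simp add: eval_nat_numeral algebra_simps)
lemma p5: "(T::int fps) * T^4 = T^5"
  by (simp add: eval_nat_numeral)
lemma p4: "(T::int fps)^4 = T^3 * T"
  by (simp add: eval_nat_numeral)
lemma nd: "\<not> 5 dvd i \<Longrightarrow> i \<le> 5*n \<Longrightarrow> \<not> 5 dvd (5*n - (i::nat))"
proof
  assume a: "\<not> 5 dvd i" "i \<le> 5*n" "5 dvd (5*n - i)"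
  have e: "5*n - (5*n - i) = i" using a(2) by simp
  have "5 dvd (5*n - (5*n - i))" by (rule dvd_diff_nat[OF _ a(3)]) simp
  then show False using a(1) e by simp
qed

lemma binom5: "(a + b)^5 = a^5 + b^5 + fps_const 5 * (a^4*b + 2*a^3*b^2 + 2*a^2*b^3 + a*b^4)"
  for a b :: "int fps"
proof -
  have "fps_const (5::int) = 5" by (simp add: fps_numeral_fps_const)
  then show ?thesis by (simp only: binom5_gen)
qed

lemma cutoff_Suc: "fps_cutoff (Suc N) f = fps_cutoff N f + fps_const (f $ N) * qX^N"
  by (auto simp: fps_eq_iff less_Suc_eq)

lemma frob_mono: "cong5 ((fps_const c * qX^N)^5) (dil (fps_const c * qX^N))"
  unfolding cong5_def z5_def
proof
  fix n
  have eq: "(fps_const c * qX^N)^5 = fps_const (c^5) * qX^(5*N)"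
    by (simp only: power_mult_distrib fps_const_power power_mult[symmetric] mult.commute)
  have l: "((fps_const c * qX^N)^5) $ n = (if n = 5*N then c^5 else 0)" unfolding eq by simp
  have r: "dil (fps_const c * qX^N) $ n = (if n = 5*N then c else 0)"
    by (auto simp: dil_nth)
  show "5 dvd ((fps_const c * qX ^ N) ^ 5 - dil (fps_const c * qX ^ N)) $ n"
    unfolding fps_sub_nth l r using fermat5[of c] by simp
qed

lemma frob_cutoff: "cong5 ((fps_cutoff N f)^5) (dil (fps_cutoff N f))"
proof (induction N)
  case 0 then show ?case by (simp add: dil_def)
next
  case (Suc N)
  define a where "a = fps_cutoff N f"
  define b where "b = fps_const (f $ N) * qX^N"
  have "cong5 ((a + b)^5) (a^5 + b^5)"
    unfolding binom5 cong5_def by (simp add: z5_const5)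
  moreover have "cong5 (a^5 + b^5) (dil a + dil b)"
    using Suc unfolding a_def b_def by (intro cong5_add frob_mono)
  ultimately have "cong5 ((a + b)^5) (dil (a + b))" by (simp add: dil_add cong5_trans)
  then show ?case by (simp add: cutoff_Suc a_def b_def)
qed

lemma eqm_power: "eqm M f g \<Longrightarrow> eqm M (f^k) (g^k)"
  by (induction k) (auto intro: eqm_mult)

lemma frob: "cong5 (f^5) (dil f)"
  unfolding cong5_def z5_def
proof
  fix n
  define N where "N = Suc n"
  have "eqm N f (fps_cutoff N f)" by (simp add: eqm_def)
  then have "eqm N (f^5) ((fps_cutoff N f)^5)" by (rule eqm_power)
  then have e1: "(f^5) $ n = ((fps_cutoff N f)^5) $ n" by (simp add: eqm_def N_def)
  have e2: "dil f $ n = dil (fps_cutoff N f) $ n"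
    by (simp add: dil_nth N_def) (metis div_le_dividend le_imp_less_Suc)
  show "5 dvd (f ^ 5 - dil f) $ n"
    using cong5_nth[OF frob_cutoff[of N f], of n] e1 e2 by simp
qed

lemma Agf_cong: "cong5 Agf (T^4 * dil Agf)"
proof -
  define D where "D = T^4 * dil Agf - Agf"
  have TD: "T * D = T^5 * dil Agf - 1"
    unfolding D_def right_diff_distrib T_Agf mult.assoc[symmetric] p5 by simp
  have "cong5 (T^5 * dil Agf - 1) (dil T * dil Agf - 1)"
    by (intro cong5_diff cong5_mult frob cong5_refl)
  also have "dil T * dil Agf - 1 = 0" by (simp add: dil_mult[symmetric] T_Agf)
  finally have "cong5 (T * D) 0" using TD by simp
  then have "cong5 (Agf * (T * D)) (Agf * 0)" by (intro cong5_mult cong5_refl)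
  moreover have "Agf * (T * D) = D" using T_Agf by (simp add: ac_simps)
  ultimately have "cong5 D 0" by simp
  then show ?thesis unfolding D_def cong5_def by (simp add: z5_def dvd_diff_commute)
qed

lemma coeff5:
  assumes H: "\<And>m. (5::int) dvd ((T^4) $ (5*m) - (T^4) $ m)"
  shows "(5::int) dvd (Agf $ (5*n) - (T^3) $ n)"
proof -
  define U where "U = T^4"
  define U' where "U' = Abs_fps (\<lambda>m. U $ (5*m))"
  define W where "W = U - dil U'"
  have W0: "W $ i = 0" if "5 dvd i" for i
    using that unfolding W_def U'_def by (auto simp: dil_nth)
  have "(W * dil Agf) $ (5*n) = 0"
    unfolding fps_mult_nth
  proof (rule sum.neutral, intro ballI)
    fix i assume i: "i \<in> {0..5*n}"
    show "W $ i * dil Agf $ (5 * n - i) = 0"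
    proof (cases "5 dvd i")
      case True then show ?thesis by (simp add: W0)
    next
      case False
      then have "\<not> 5 dvd (5*n - i)" using i nd by simp
      then show ?thesis by (simp add: dil_nth)
    qed
  qed
  moreover have "U * dil Agf = dil (U' * Agf) + W * dil Agf"
    unfolding W_def by (simp add: dil_mult algebra_simps)
  ultimately have e1: "(U * dil Agf) $ (5*n) = (U' * Agf) $ n"
    by (simp add: dil_nth)
  have "cong5 U' U" unfolding cong5_def z5_def U'_def U_def using H by simp
  then have "cong5 (U' * Agf) (U * Agf)" by (intro cong5_mult cong5_refl)
  moreover have "U * Agf = T^3" unfolding U_def p4 using T_Agf by (simp add: mult.assoc)
  ultimately have e2: "(5::int) dvd ((U' * Agf) $ n - (T^3) $ n)" by (simp add: cong5_nth)
  have e3: "(5::int) dvd (Agf $ (5*n) - (U * dil Agf) $ (5*n))"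
    using cong5_nth[OF Agf_cong] unfolding U_def by simp
  have "Agf $ (5*n) - (T^3) $ n = (Agf $ (5*n) - (U * dil Agf) $ (5*n)) + ((U' * Agf) $ n - (T^3) $ n)"
    using e1 by simp
  then show ?thesis using e2 e3 by (metis dvd_add)
qed



lemma fiber_sum_eq:
  "{p. w1 (fst p) + w2 (snd p) = (n::nat)} = (\<Union>i\<in>{0..n}. {x. w1 x = i} \<times> {y. w2 y = n - i})"
  by auto

lemma finite_fiber_sum:
  assumes "\<And>i. finite {x. w1 x = (i::nat)}" "\<And>i. finite {y. w2 y = (i::nat)}"
  shows "finite {p. w1 (fst p) + w2 (snd p) = n}"
  unfolding fiber_sum_eq using assms by auto

lemma card_fiber_sum:
  assumes "\<And>i. finite {x. w1 x = (i::nat)}" "\<And>i. finite {y. w2 y = (i::nat)}"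
  shows "card {p. w1 (fst p) + w2 (snd p) = n} = (\<Sum>i=0..n. card {x. w1 x = i} * card {y. w2 y = n - i})"
proof -
  have "card (\<Union>i\<in>{0..n}. {x. w1 x = i} \<times> {y. w2 y = n - i})
      = (\<Sum>i\<in>{0..n}. card ({x. w1 x = i} \<times> {y. w2 y = n - i}))"
    by (rule card_UN_disjoint) (use assms in auto)
  then show ?thesis unfolding fiber_sum_eq by (simp add: card_cartesian_product)
qed

definition Th :: "('a \<Rightarrow> nat) \<Rightarrow> int fps" where
  "Th w = Abs_fps (\<lambda>n. int (card {x. w x = n}))"

lemma Th_mult:
  assumes "\<And>i. finite {x. w1 x = (i::nat)}" "\<And>i. finite {y. w2 y = (i::nat)}"
  shows "Th (\<lambda>p. w1 (fst p) + w2 (snd p)) = Th w1 * Th w2"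
  by (simp add: fps_eq_iff Th_def fps_mult_nth card_fiber_sum[OF assms])

definition tw :: "int fps \<Rightarrow> int fps" where "tw f = Abs_fps (\<lambda>n. (-1)^n * f $ n)"

lemma tw_mult: "tw (f * g) = tw f * tw g"
proof -
  have "(tw (f * g)) $ n = (tw f * tw g) $ n" for n
  proof -
    have "(tw f * tw g) $ n = (\<Sum>i=0..n. (-1)^n * (f $ i * g $ (n - i)))"
      unfolding fps_mult_nth tw_def
    proof (simp, rule sum.cong)
      fix i assume "i \<in> {0..n}"
      then have "(-1::int)^i * (-1)^(n-i) = (-1)^n" by (simp add: power_add[symmetric])
      then show "(-1)^i * f $ i * ((-1)^(n-i) * g $ (n - i)) = (-1)^n * (f $ i * g $ (n - i))"
        by (metis (no_types, lifting) mult.assoc mult.left_commute)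
    qed simp
    then show ?thesis by (simp add: tw_def fps_mult_nth sum_distrib_left)
  qed
  then show ?thesis by (simp add: fps_eq_iff)
qed

definition sq :: "int \<Rightarrow> nat" where "sq k = nat (k^2)"

lemma sq_fiber: "{k. sq k = i} = {k. k^2 = int i}"
  unfolding sq_def by auto

lemma finite_sq_fiber: "finite {k. sq k = i}"
proof -
  have "{k. sq k = i} \<subseteq> {-int i..int i}"
  proof
    fix k assume "k \<in> {k. sq k = i}"
    then have "k^2 = int i" unfolding sq_fiber by simp
    then have "\<bar>k\<bar> \<le> int i" using abs_le_sq[of k] by simp
    then show "k \<in> {-int i..int i}" by auto
  qed
  then show ?thesis by (rule finite_subset) simp
qed

lemma T_Th: "T = tw (Th sq)"
  by (simp add: fps_eq_iff T_def tw_def Th_def sq_fiber)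

definition w2 :: "int \<times> int \<Rightarrow> nat" where "w2 p = sq (fst p) + sq (snd p)"
definition w3 :: "int \<times> int \<times> int \<Rightarrow> nat" where "w3 p = sq (fst p) + w2 (snd p)"
definition w4 :: "int \<times> int \<times> int \<times> int \<Rightarrow> nat" where "w4 p = sq (fst p) + w3 (snd p)"

lemma fin_w2: "finite {x. w2 x = i}"
  unfolding w2_def by (rule finite_fiber_sum) (rule finite_sq_fiber)+
lemma fin_w3: "finite {x. w3 x = i}"
  unfolding w3_def by (rule finite_fiber_sum) (rule finite_sq_fiber, rule fin_w2)
lemma fin_w4: "finite {x. w4 x = i}"
  unfolding w4_def by (rule finite_fiber_sum) (rule finite_sq_fiber, rule fin_w3)

lemma Th_w2: "Th w2 = Th sq * Th sq"
  unfolding w2_def by (rule Th_mult) (rule finite_sq_fiber)+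
lemma Th_w3: "Th w3 = Th sq * Th w2"
  unfolding w3_def by (rule Th_mult) (rule finite_sq_fiber, rule fin_w2)
lemma Th_w4: "Th w4 = Th sq * Th w3"
  unfolding w4_def by (rule Th_mult) (rule finite_sq_fiber, rule fin_w3)

lemma T3_tw: "T^3 = tw (Th w3)"
  by (simp add: Th_w3 Th_w2 tw_mult T_Th eval_nat_numeral)

lemma T4_tw: "T^4 = tw (Th w4)"
  by (simp add: Th_w4 Th_w3 Th_w2 tw_mult T_Th eval_nat_numeral)

definition r3 :: "nat \<Rightarrow> nat" where
  "r3 n = card {(a::int,b::int,c::int). a^2 + b^2 + c^2 = int n}"
definition r4 :: "nat \<Rightarrow> nat" where
  "r4 n = card {(a::int,b::int,c::int,d::int). a^2 + b^2 + c^2 + d^2 = int n}"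

lemma w3_fiber: "{x. w3 x = n} = {(a::int,b::int,c::int). a^2 + b^2 + c^2 = int n}"
proof -
  have "w3 (a,b,c) = n \<longleftrightarrow> a^2 + b^2 + c^2 = int n" for a b c
  proof -
    have "int (w3 (a,b,c)) = a^2 + b^2 + c^2" by (simp add: w3_def w2_def sq_def)
    then show ?thesis by linarith
  qed
  then show ?thesis by auto
qed

lemma w4_fiber: "{x. w4 x = n} = {(a::int,b::int,c::int,d::int). a^2 + b^2 + c^2 + d^2 = int n}"
proof -
  have "w4 (a,b,c,d) = n \<longleftrightarrow> a^2 + b^2 + c^2 + d^2 = int n" for a b c d
  proof -
    have "int (w4 (a,b,c,d)) = a^2 + b^2 + c^2 + d^2" by (simp add: w4_def w3_def w2_def sq_def)
    then show ?thesis by linarith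
  qed
  then show ?thesis by auto
qed

lemma T3_nth: "(T^3) $ n = (-1)^n * int (r3 n)"
  by (simp add: T3_tw tw_def Th_def w3_fiber r3_def)

lemma T4_nth: "(T^4) $ n = (-1)^n * int (r4 n)"
  by (simp add: T4_tw tw_def Th_def w4_fiber r4_def)

lemma finite_S4: "finite {(a::int,b::int,c::int,d::int). a^2 + b^2 + c^2 + d^2 = int n}"
  using fin_w4[of n] by (simp add: w4_fiber)



type_synonym v4 = "int \<times> int \<times> int \<times> int"

fun h :: "nat \<Rightarrow> int \<Rightarrow> v4 \<Rightarrow> v4" where
  "h k e (a,b,c,d) = (if k = 1 then (2*a - e*b, e*a + 2*b, 2*c + e*d, 2*d - e*c)
     else if k = 2 then (2*a - e*c, 2*b - e*d, e*a + 2*c, e*b + 2*d)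
     else (2*a - e*d, 2*b + e*c, 2*c - e*b, e*a + 2*d))"

fun dv5 :: "v4 \<Rightarrow> bool" where
  "dv5 (a,b,c,d) \<longleftrightarrow> 5 dvd a \<and> 5 dvd b \<and> 5 dvd c \<and> 5 dvd d"

fun ad :: "v4 \<Rightarrow> v4 \<Rightarrow> v4" where
  "ad (a,b,c,d) (a',b',c',d') = (a+a', b+b', c+c', d+d')"
fun sc5 :: "v4 \<Rightarrow> v4" where "sc5 (a,b,c,d) = (5*a, 5*b, 5*c, 5*d)"
fun md :: "v4 \<Rightarrow> v4" where "md (a,b,c,d) = (a mod 5, b mod 5, c mod 5, d mod 5)"
fun dq :: "v4 \<Rightarrow> v4" where "dq (a,b,c,d) = (a div 5, b div 5, c div 5, d div 5)"
fun nrm :: "v4 \<Rightarrow> int" where "nrm (a,b,c,d) = a^2 + b^2 + c^2 + d^2"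

definition Jl :: "(nat \<times> int) list" where "Jl = [(1,1),(1,-1),(2,1),(2,-1),(3,1),(3,-1)]"

definition cnt :: "v4 \<Rightarrow> nat" where
  "cnt x = length (filter (\<lambda>j. dv5 (h (fst j) (- snd j) x)) Jl)"

definition L5 :: "int list" where "L5 = [0,1,2,3,4]"

lemma check: "\<forall>a\<in>set L5. \<forall>b\<in>set L5. \<forall>c\<in>set L5. \<forall>d\<in>set L5.
   5 dvd nrm (a,b,c,d) \<and> \<not> dv5 (a,b,c,d) \<longrightarrow> cnt (a,b,c,d) = 1"
  unfolding cnt_def Jl_def L5_def by code_simp

lemma check': "a \<in> set L5 \<Longrightarrow> b \<in> set L5 \<Longrightarrow> c \<in> set L5 \<Longrightarrow> d \<in> set L5 \<Longrightarrow>
   5 dvd nrm (a,b,c,d) \<Longrightarrow> \<not> dv5 (a,b,c,d) \<Longrightarrow> cnt (a,b,c,d) = 1"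
  using check by blast

lemma decomp: "x = ad (md x) (sc5 (dq x))"
  by (cases x) simp

lemma h_ad: "h k e (ad x y) = ad (h k e x) (h k e y)"
  by (cases x; cases y) (simp add: algebra_simps)

lemma h_sc5: "h k e (sc5 x) = sc5 (h k e x)"
  by (cases x) (simp add: algebra_simps)

lemma d5: "(5::int) dvd x + 5*y \<longleftrightarrow> 5 dvd x"
  by (rule dvd_add_left_iff) simp

lemma dv5_ad_sc5: "dv5 (ad u (sc5 v)) \<longleftrightarrow> dv5 u"
  by (cases u; cases v) (simp only: sc5.simps ad.simps dv5.simps d5)

lemma dv5_sc5[simp]: "dv5 (sc5 v)"
  by (cases v) simp

lemma dv5_h_md: "dv5 (h k e x) \<longleftrightarrow> dv5 (h k e (md x))"
proof -
  have "h k e x = ad (h k e (md x)) (sc5 (h k e (dq x)))"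
    by (subst decomp[of x]) (simp only: h_ad h_sc5)
  then show ?thesis by (simp add: dv5_ad_sc5)
qed

lemma dv5_md: "dv5 x \<longleftrightarrow> dv5 (md x)"
  by (subst decomp[of x]) (simp only: dv5_ad_sc5)

lemma nrm_md: "5 dvd nrm x \<longleftrightarrow> 5 dvd nrm (md x)"
proof -
  obtain a b c d where x: "x = (a,b,c,d)" by (cases x)
  have "[nrm x = nrm (md x)] (mod 5)"
    unfolding x by simp (intro cong_add cong_pow; simp)
  then show ?thesis by (rule cong_dvd_iff)
qed

lemma md_range: "md x = (a,b,c,d) \<Longrightarrow> a \<in> set L5 \<and> b \<in> set L5 \<and> c \<in> set L5 \<and> d \<in> set L5"
proof -
  assume m: "md x = (a,b,c,d)"
  have r: "z mod 5 \<in> set L5" for z :: int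
  proof -
    have "0 \<le> z mod 5" "z mod 5 < 5" by simp_all
    then have "z mod 5 = 0 \<or> z mod 5 = 1 \<or> z mod 5 = 2 \<or> z mod 5 = 3 \<or> z mod 5 = 4" by linarith
    then show ?thesis unfolding L5_def by auto
  qed
  obtain a' b' c' d' where x: "x = (a',b',c',d')" by (cases x)
  show ?thesis using m r unfolding x by auto
qed

lemma cnt_one: "5 dvd nrm x \<Longrightarrow> \<not> dv5 x \<Longrightarrow> cnt x = 1"
proof -
  assume a: "5 dvd nrm x" "\<not> dv5 x"
  obtain a b c d where m: "md x = (a,b,c,d)" by (cases "md x")
  have "cnt x = cnt (md x)"
    unfolding cnt_def by (simp add: dv5_h_md[of _ _ x])
  also have "\<dots> = 1"
  proof -
    have r: "a \<in> set L5" "b \<in> set L5" "c \<in> set L5" "d \<in> set L5" using md_range[OF m] by auto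
    have "5 dvd nrm (md x)" using a(1) nrm_md[of x] by blast
    then have n5: "5 dvd nrm (a,b,c,d)" unfolding m .
    have "\<not> dv5 (md x)" using a(2) dv5_md[of x] by blast
    then have nd: "\<not> dv5 (a,b,c,d)" unfolding m .
    show ?thesis unfolding m by (rule check'[OF r n5 nd])
  qed
  finally show ?thesis .
qed

lemma cnt_all: "dv5 x \<Longrightarrow> cnt x = 6"
proof -
  assume "dv5 x"
  then obtain y where y: "x = sc5 y" by (cases x) (auto simp: dvd_def)
  have "dv5 (h k e x)" for k e unfolding y h_sc5 by (rule dv5_sc5)
  then show ?thesis unfolding cnt_def Jl_def by simp
qed

lemma card_J: "card {j \<in> set Jl. dv5 (h (fst j) (- snd j) x)} = cnt x"
proof -
  have "distinct Jl" by (simp add: Jl_def)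
  then have "length (filter (\<lambda>j. dv5 (h (fst j) (- snd j) x)) Jl) = card {j \<in> set Jl. dv5 (h (fst j) (- snd j) x)}"
    by (simp add: distinct_length_filter Int_def conj_commute)
  then show ?thesis unfolding cnt_def by simp
qed



definition Sn :: "nat \<Rightarrow> v4 set" where "Sn n = {x. nrm x = int n}"

lemma r4_Sn: "r4 n = card (Sn n)"
proof -
  have "{(a::int,b::int,c::int,d::int). a^2 + b^2 + c^2 + d^2 = int n} = Sn n"
    unfolding Sn_def by auto
  then show ?thesis unfolding r4_def by simp
qed

lemma finite_Sn: "finite (Sn n)"
proof -
  have "{(a::int,b::int,c::int,d::int). a^2 + b^2 + c^2 + d^2 = int n} = Sn n"
    unfolding Sn_def by auto
  then show ?thesis using finite_S4[of n] by simp
qed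

lemma pm1: "e \<in> {1,-1} \<Longrightarrow> e = 1 \<or> e = (-1::int)" by auto

lemma nrm_h: "e \<in> {1,-1} \<Longrightarrow> nrm (h k e x) = 5 * nrm x"
  by (cases x, drule pm1) (auto simp: power2_eq_square algebra_simps)

lemma hh: "e \<in> {1,-1} \<Longrightarrow> h k e (h k (-e) x) = sc5 x"
  by (cases x, drule pm1) (auto simp: algebra_simps)

lemma sc5_inj: "sc5 x = sc5 y \<Longrightarrow> x = y"
  by (cases x; cases y) auto

lemma nrm_sc5: "nrm (sc5 x) = 25 * nrm x"
  by (cases x) (simp add: power2_eq_square algebra_simps)

lemma dv5_ex: "dv5 x \<Longrightarrow> \<exists>z. x = sc5 z"
  by (cases x) (auto simp: dvd_def)

lemma inj_h: "e \<in> {1,-1} \<Longrightarrow> inj (h k e)"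
proof (rule injI)
  fix x y assume e: "e \<in> {1,-1}" and eq: "h k e x = h k e y"
  have e': "-e \<in> {1,-1}" using e by auto
  have "sc5 x = sc5 y" using hh[OF e', of k x] hh[OF e', of k y] eq by simp
  then show "x = y" by (rule sc5_inj)
qed

lemma img: "e \<in> {1,-1} \<Longrightarrow> h k e ` Sn n = {x \<in> Sn (5*n). dv5 (h k (-e) x)}"
proof (intro set_eqI iffI)
  fix x assume e: "e \<in> {1,-1}" and "x \<in> h k e ` Sn n"
  then obtain z where z: "z \<in> Sn n" "x = h k e z" by auto
  have e': "-e \<in> {1,-1}" using e by auto
  have "nrm x = int (5*n)" using z nrm_h[OF e] by (simp add: Sn_def)
  moreover have "h k (-e) x = sc5 z" using hh[OF e', of k z] z by simp
  ultimately show "x \<in> {x \<in> Sn (5*n). dv5 (h k (-e) x)}" by (simp add: Sn_def)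
next
  fix x assume e: "e \<in> {1,-1}" and x: "x \<in> {x \<in> Sn (5*n). dv5 (h k (-e) x)}"
  then obtain z where z: "h k (-e) x = sc5 z" using dv5_ex by blast
  have "sc5 x = h k e (h k (-e) x)" using hh[OF e] by simp
  also have "\<dots> = sc5 (h k e z)" by (simp add: z h_sc5)
  finally have xz: "x = h k e z" by (rule sc5_inj)
  have e': "-e \<in> {1,-1}" using e by auto
  have "25 * nrm z = 5 * nrm x" using nrm_h[OF e', of k x] z nrm_sc5[of z] by simp
  then have "nrm z = int n" using x by (simp add: Sn_def)
  then show "x \<in> h k e ` Sn n" using xz by (auto simp: Sn_def)
qed

lemma card_img: "e \<in> {1,-1} \<Longrightarrow> card {x \<in> Sn (5*n). dv5 (h k (-e) x)} = r4 n"
  using card_image[OF inj_on_subset[OF inj_h subset_UNIV], of e k "Sn n"] img[of e k n]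
  by (simp add: r4_Sn)

lemma card_filter_sum: "finite A \<Longrightarrow> card {x\<in>A. Q x} = (\<Sum>x\<in>A. if Q x then 1 else 0)"
  by (simp add: sum.inter_filter[symmetric])

lemma hecke: "(5::int) dvd (int (r4 (5*n)) - int (r4 n))"
proof -
  define S where "S = Sn (5*n)"
  define J where "J = set Jl"
  define P where "P j x = dv5 (h (fst j) (- snd j) x)" for j x
  have finS: "finite S" unfolding S_def by (rule finite_Sn)
  have finJ: "finite J" unfolding J_def by simp
  have cJ: "card J = 6" unfolding J_def Jl_def by simp
  have Je: "snd j \<in> {1,-1}" if "j \<in> J" for j using that unfolding J_def Jl_def by auto
  have "(\<Sum>j\<in>J. card {x\<in>S. P j x}) = (\<Sum>j\<in>J. r4 n)"
    unfolding S_def P_def using card_img Je by (intro sum.cong) auto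
  also have "\<dots> = 6 * r4 n" using cJ by simp
  finally have l: "(\<Sum>j\<in>J. card {x\<in>S. P j x}) = 6 * r4 n" .
  have "(\<Sum>j\<in>J. card {x\<in>S. P j x}) = (\<Sum>j\<in>J. \<Sum>x\<in>S. if P j x then 1 else 0)"
    using finS by (simp add: card_filter_sum)
  also have "\<dots> = (\<Sum>x\<in>S. \<Sum>j\<in>J. if P j x then 1 else 0)" by (rule sum.swap)
  also have "\<dots> = (\<Sum>x\<in>S. card {j\<in>J. P j x})" using finJ by (simp add: card_filter_sum)
  also have "\<dots> = (\<Sum>x\<in>S. cnt x)" unfolding J_def P_def by (simp add: card_J)
  also have "\<dots> = (\<Sum>x\<in>S. 1 + (if dv5 x then 5 else 0))"
  proof (rule sum.cong)
    fix x assume "x \<in> S"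
    then have "5 dvd nrm x" unfolding S_def Sn_def by simp
    then show "cnt x = 1 + (if dv5 x then 5 else 0)" using cnt_one cnt_all by auto
  qed simp
  also have "\<dots> = (\<Sum>x\<in>S. 1) + (\<Sum>x\<in>S. 5 * (if dv5 x then 1 else 0))"
    by (subst sum.distrib[symmetric]) (rule sum.cong, auto)
  also have "\<dots> = card S + 5 * card {x\<in>S. dv5 x}"
    using finS by (simp add: card_filter_sum sum_distrib_left)
  finally have "6 * r4 n = r4 (5*n) + 5 * card {x\<in>S. dv5 x}"
    using l by (simp add: S_def r4_Sn)
  then have "int (6 * r4 n) = int (r4 (5*n) + 5 * card {x\<in>S. dv5 x})" by (rule arg_cong)
  then have "6 * int (r4 n) = int (r4 (5*n)) + 5 * int (card {x\<in>S. dv5 x})" by simp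
  then have "int (r4 (5*n)) - int (r4 n) = 5 * int (r4 n) - 5 * int (card {x\<in>S. dv5 x})"
    by linarith
  then have "int (r4 (5*n)) - int (r4 n) = 5 * (int (r4 n) - int (card {x\<in>S. dv5 x}))"
    by (simp add: right_diff_distrib)
  then show ?thesis by simp
qed



lemma sq_mod8: "(a::int)^2 mod 8 \<in> {0,1,4}"
proof -
  define r where "r = a mod 8"
  have "a^2 mod 8 = r^2 mod 8" unfolding r_def by (simp add: power_mod)
  moreover have "0 \<le> r" "r < 8" unfolding r_def by simp_all
  then have "r = 0 \<or> r = 1 \<or> r = 2 \<or> r = 3 \<or> r = 4 \<or> r = 5 \<or> r = 6 \<or> r = 7" by linarith
  ultimately show ?thesis by (elim disjE) simp_all
qed
lemma sq_mod4: "(a::int)^2 mod 4 = (if even a then 0 else 1)"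
proof -
  define r where "r = a mod 4"
  have "a^2 mod 4 = r^2 mod 4" unfolding r_def by (simp add: power_mod)
  moreover have "even a \<longleftrightarrow> even r" unfolding r_def by (simp add: even_mod_4_div_2 even_iff_mod_2_eq_zero mod_mod_cancel)
  moreover have "0 \<le> r" "r < 4" unfolding r_def by simp_all
  then have "r = 0 \<or> r = 1 \<or> r = 2 \<or> r = 3" by linarith
  ultimately show ?thesis by (elim disjE) simp_all
qed

definition S3 :: "nat \<Rightarrow> (int \<times> int \<times> int) set" where
  "S3 n = {(a::int,b::int,c::int). a^2 + b^2 + c^2 = int n}"

lemma r3_S3: "r3 n = card (S3 n)" unfolding r3_def S3_def by simp

lemma r3_87: "r3 (8*n+7) = 0"
proof -
  have "S3 (8*n+7) = {}"
  proof (rule ccontr)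
    assume "S3 (8*n+7) \<noteq> {}"
    then obtain a b c where e: "a^2 + b^2 + c^2 = int (8*n+7)" unfolding S3_def by auto
    have "[a^2 + b^2 + c^2 = a^2 mod 8 + b^2 mod 8 + c^2 mod 8] (mod 8)"
      by (intro cong_add) simp_all
    then have "(a^2 + b^2 + c^2) mod 8 = (a^2 mod 8 + b^2 mod 8 + c^2 mod 8) mod 8"
      by (simp add: cong_def)
    moreover have "int (8*n+7) mod 8 = 7" by simp
    moreover have "a^2 mod 8 \<in> {0,1,4}" "b^2 mod 8 \<in> {0,1,4}" "c^2 mod 8 \<in> {0,1,4}"
      by (rule sq_mod8)+
    ultimately show False using e by auto
  qed
  then show ?thesis by (simp add: r3_S3)
qed

lemma even_of_sum4: "a^2 + b^2 + c^2 = 4 * (m::int) \<Longrightarrow> even a \<and> even b \<and> even c"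
proof -
  assume e: "a^2 + b^2 + c^2 = 4 * m"
  have "[a^2 + b^2 + c^2 = a^2 mod 4 + b^2 mod 4 + c^2 mod 4] (mod 4)"
    by (intro cong_add) simp_all
  then have "(a^2 + b^2 + c^2) mod 4 = (a^2 mod 4 + b^2 mod 4 + c^2 mod 4) mod 4"
    by (simp add: cong_def)
  then have "(a^2 mod 4 + b^2 mod 4 + c^2 mod 4) mod 4 = 0" using e by simp
  then show ?thesis unfolding sq_mod4 by (auto split: if_splits)
qed

lemma r3_4: "r3 (4*n) = r3 n"
proof -
  let ?f = "\<lambda>(a::int,b::int,c::int). (2*a, 2*b, 2*c)"
  have "bij_betw ?f (S3 n) (S3 (4*n))"
  proof (rule bij_betw_imageI)
    show "inj_on ?f (S3 n)" by (auto simp: inj_on_def)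
    show "?f ` S3 n = S3 (4*n)"
    proof (intro set_eqI iffI)
      fix x assume "x \<in> ?f ` S3 n"
      then obtain a b c where "x = (2*a,2*b,2*c)" "a^2 + b^2 + c^2 = int n"
        unfolding S3_def by auto
      then show "x \<in> S3 (4*n)" unfolding S3_def by (auto simp: power_mult_distrib)
    next
      fix x assume "x \<in> S3 (4*n)"
      then obtain a b c where x: "x = (a,b,c)" and e: "a^2 + b^2 + c^2 = 4 * int n"
        unfolding S3_def by auto
      then have "even a" "even b" "even c" using even_of_sum4 by blast+
      then obtain a' b' c' where "a = 2*a'" "b = 2*b'" "c = 2*c'" by (auto elim!: evenE)
      moreover have "4 * (a'^2 + b'^2 + c'^2) = 4 * int n"
        using e calculation by (simp add: power_mult_distrib algebra_simps)
      ultimately show "x \<in> ?f ` S3 n" unfolding S3_def using x by (auto intro!: image_eqI[where x = "(a',b',c')"])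
    qed
  qed
  then show ?thesis by (simp add: r3_S3 bij_betw_same_card)
qed

lemma r3_pow4: "r3 (4^k * m) = r3 m"
proof (induction k)
  case 0 then show ?case by simp
next
  case (Suc k)
  have "r3 (4^Suc k * m) = r3 (4 * (4^k * m))" by (simp add: ac_simps)
  also have "\<dots> = r3 m" using r3_4 Suc by simp
  finally show ?case .
qed

lemma neg1_pow5: "(-1::int)^(5*m) = (-1)^m"
  by (simp add: power_mult)

lemma main5: "(5::int) dvd (int (overpartition_count (5*n)) - (-1)^n * int (r3 n))"
proof -
  have H: "(5::int) dvd ((T^4) $ (5*m) - (T^4) $ m)" for m
  proof -
    have "(T^4) $ (5*m) - (T^4) $ m = (-1)^m * (int (r4 (5*m)) - int (r4 m))"
      by (simp add: T4_nth neg1_pow5 right_diff_distrib)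
    then show ?thesis using hecke[of m] by simp
  qed
  show ?thesis using coeff5[OF H, of n] by (simp add: Agf_def T3_nth)
qed

theorem corollary1:
  fixes n \<alpha> :: nat
  shows "[int (overpartition_count (4 ^ \<alpha> * (40 * n + 35))) = 0] (mod 5) \<and>
         [int (overpartition_count (5 * 4 ^ (\<alpha> + 1) * n))
          = (-1) ^ n * int (overpartition_count (5 * n))] (mod 5)"
proof
  define m where "m = 4^\<alpha> * (8*n+7)"
  have "4 ^ \<alpha> * (40 * n + 35) = 5 * m" unfolding m_def by simp
  moreover have "r3 m = 0" unfolding m_def by (simp add: r3_pow4 r3_87)
  ultimately show "[int (overpartition_count (4 ^ \<alpha> * (40 * n + 35))) = 0] (mod 5)"
    using main5[of m] by (simp add: cong_iff_dvd_diff)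
next
  define m where "m = 4^(\<alpha>+1) * n"
  have e1: "5 * 4 ^ (\<alpha> + 1) * n = 5 * m" unfolding m_def by simp
  have ev: "even m" unfolding m_def by simp
  have r: "r3 m = r3 n" unfolding m_def by (rule r3_pow4)
  have d1: "(5::int) dvd (int (overpartition_count (5*m)) - int (r3 n))"
    using main5[of m] ev r by simp
  have d2: "(5::int) dvd ((-1)^n * (int (overpartition_count (5*n)) - (-1)^n * int (r3 n)))"
    using main5[of n] by simp
  have sq: "(-1::int)^n * (-1)^n = 1" by (simp add: power_add[symmetric])
  have "int (overpartition_count (5*m)) - (-1)^n * int (overpartition_count (5*n))
      = (int (overpartition_count (5*m)) - int (r3 n)) - (-1)^n * (int (overpartition_count (5*n)) - (-1)^n * int (r3 n))"
    using sq by (simp add: algebra_simps)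
  then have "(5::int) dvd (int (overpartition_count (5*m)) - (-1)^n * int (overpartition_count (5*n)))"
    using d1 d2 by (metis dvd_diff)
  then show "[int (overpartition_count (5 * 4 ^ (\<alpha> + 1) * n)) = (-1) ^ n * int (overpartition_count (5 * n))] (mod 5)"
    unfolding e1 by (simp add: cong_iff_dvd_diff)
qed


end
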